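(* Let $(V_{1},V_{2})$ be a pair of commuting isometries on a Hilbert space $\mathcal{H}$ with defect zero, i.e. $C(V_1,V_2)=0$. Let $(\mathcal{E},P,U)$ be the BCL triple for $(V_{1},V_{2})$. Let $\mathcal{E}_1= \operatorname{ran} P$ and $\mathcal{E}_2 = \operatorname{ran} P^\perp $. Then $\mathcal{E}_1,\mathcal{E}_2$ are reducing subspaces for $U$, i.e., $$\mathcal{E}=\mathcal{E}_1\oplus\mathcal{E}_2, \ U=\begin{pmatrix} U_1 & 0 \\ 0 & U_2 \end{pmatrix} \text{ and } P=\begin{pmatrix} I_{\mathcal{E}_1} & 0 \\ 0 & 0 \end{pmatrix}\text{ in } \mathcal{B}(\mathcal{E}_1\oplus \mathcal{E}_2)$$ for some unitaries $U_1$ and $U_2$ on $\mathcal{E}_1$ and $\mathcal{E}_2$ respectively. Also $\mathcal{H}=(H^2_{\mathbb{D}}\otimes \mathcal{E}_1) \oplus (H^2_{\mathbb{D}}\otimes \mathcal{E}_2) \oplus \mathcal{K}$ and in this decomposition, $$V_1= \begin{pmatrix} M_z\otimes I_{\mathcal{E}_1}& 0&0\\ 0& I_{H^2_{\mathbb{D}}}\otimes U_2^* & 0\\ 0&0&W_1 \end{pmatrix}, \quad V_2= \begin{pmatrix} I_{H^2_{\mathbb{D}}}\otimes U_1 & 0&0\\ 0& M_z\otimes I_{\mathcal{E}_2} & 0\\ 0&0&W_2 \end{pmatrix},$$ up to unitary equivalence, for some unitary $U_i$ on $\mathcal{E}_i, i=1,2$ and commuting unitaries $W_1, W_2$ on 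$\mathcal{K}$.
   Context: For commuting isometries $V_1,V_2$ on $\mathcal{H}$, the defect operator is $C(V_1,V_2)=I-V_1V_1^*-V_2V_2^*+V_1V_2V_2^*V_1^*$. $H^2_{\mathbb{D}}$ is the Hardy space of scalar-valued functions on the unit disc $\mathbb{D}$, $M_z$ is multiplication by the coordinate function $z$ on it, and $H^2_{\mathbb{D}}(\mathcal{E})$ is identified with $H^2_{\mathbb{D}}\otimes\mathcal{E}$. By the Berger–Coburn–Lebow theorem, up to unitary equivalence $\mathcal{H}=\mathcal{H}_p\oplus\mathcal{H}_u$ with both summands reducing, where there is a unique (up to unitary equivalence) triple $(\mathcal{E},P,U)$ consisting of a Hilbert space $\mathcal{E}$ (namely $\ker (V_1V_2)^*$), a projection $P$ on $\mathcal{E}$ and a unitary $U$ on $\mathcal{E}$, such that $\mathcal{H}_p=H^2_{\mathbb{D}}(\mathcal{E})$ and $(V_1|_{\mathcal{H}_p},V_2|_{\mathcal{H}_p})=(M_{\varphi_1},M_{\varphi_2})$ with $\varphi_1(z)=U^*(P^\perp+zP)$, $\varphi_2(z)=(P+zP^\perp)U$, while $V_1|_{\mathcal{H}_u},V_2|_{\mathcal{H}_u}$ are commuting unitaries. This triple $(\mathcal{E},P,U)$ is called the BCL triple for $(V_1,V_2)$. *)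

theory Defs
  imports "HOL-Analysis.Analysis"
begin

text \<open>The distribution has no complex Hilbert spaces, so we introduce the class here.
  The inner product is linear in the second and conjugate-linear in the first argument.\<close>

class complex_inner = real_normed_vector +
  fixes scaleC :: "complex \<Rightarrow> 'a \<Rightarrow> 'a" (infixr \<open>*\<^sub>C\<close> 75)
    and cinner :: "'a \<Rightarrow> 'a \<Rightarrow> complex"
  assumes scaleC_add_right: "a *\<^sub>C (x + y) = a *\<^sub>C x + a *\<^sub>C y"
    and scaleC_add_left: "(a + b) *\<^sub>C x = a *\<^sub>C x + b *\<^sub>C x"
    and scaleC_scaleC: "a *\<^sub>C (b *\<^sub>C x) = (a * b) *\<^sub>C x"
    and scaleC_one: "1 *\<^sub>C x = x"
    and scaleR_scaleC: "scaleR r x = complex_of_real r *\<^sub>C x"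
    and cinner_add_right: "cinner x (y + z) = cinner x y + cinner x z"
    and cinner_scaleC_right: "cinner x (a *\<^sub>C y) = a * cinner x y"
    and cinner_commute: "cinner y x = cnj (cinner x y)"
    and cinner_norm: "cinner x x = complex_of_real ((norm x)\<^sup>2)"

class chilbert = complex_inner + complete_space

text \<open>Non-vacuity: the complex numbers form a Hilbert space.\<close>
instantiation complex :: chilbert
begin
definition scaleC_complex :: "complex \<Rightarrow> complex \<Rightarrow> complex" where
  "scaleC_complex a x = a * x"
definition cinner_complex :: "complex \<Rightarrow> complex \<Rightarrow> complex" where
  "cinner_complex x y = cnj x * y"
instance
proof
  fix a b :: complex and x y z :: complex and r :: real
  show "a *\<^sub>C (x + y) = a *\<^sub>C x + a *\<^sub>C y" by (simp add: scaleC_complex_def distrib_left)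
  show "(a + b) *\<^sub>C x = a *\<^sub>C x + b *\<^sub>C x" by (simp add: scaleC_complex_def distrib_right)
  show "a *\<^sub>C (b *\<^sub>C x) = (a * b) *\<^sub>C x" by (simp add: scaleC_complex_def)
  show "1 *\<^sub>C x = x" by (simp add: scaleC_complex_def)
  show "scaleR r x = complex_of_real r *\<^sub>C x" by (simp add: scaleC_complex_def scaleR_conv_of_real)
  show "cinner x (y + z) = cinner x y + cinner x z" by (simp add: cinner_complex_def distrib_left)
  show "cinner x (a *\<^sub>C y) = a * cinner x y" by (simp add: cinner_complex_def scaleC_complex_def)
  show "cinner y x = cnj (cinner x y)" by (simp add: cinner_complex_def mult.commute)
  show "cinner x x = complex_of_real ((norm x)\<^sup>2)" by (simp add: cinner_complex_def complex_norm_square mult.commute del: of_real_power)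
qed
end

definition clinear :: "('a::complex_inner \<Rightarrow> 'b::complex_inner) \<Rightarrow> bool" where
  "clinear A \<longleftrightarrow> (\<forall>x y. A (x + y) = A x + A y) \<and> (\<forall>c x. A (c *\<^sub>C x) = c *\<^sub>C A x)"

definition bounded_op :: "('a::complex_inner \<Rightarrow> 'b::complex_inner) \<Rightarrow> bool" where
  "bounded_op A \<longleftrightarrow> clinear A \<and> (\<exists>K. \<forall>x. norm (A x) \<le> K * norm x)"

text \<open>Hilbert-space adjoint (exists and is unique for bounded operators on Hilbert spaces).\<close>
definition adj :: "('a::complex_inner \<Rightarrow> 'b::complex_inner) \<Rightarrow> 'b \<Rightarrow> 'a" where
  "adj A = (SOME B. \<forall>x y. cinner (A x) y = cinner x (B y))"

definition isometry :: "('a::complex_inner \<Rightarrow> 'a) \<Rightarrow> bool" where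
  "isometry V \<longleftrightarrow> bounded_op V \<and> (\<forall>x y. cinner (V x) (V y) = cinner x y)"

definition unitary :: "('a::complex_inner \<Rightarrow> 'a) \<Rightarrow> bool" where
  "unitary U \<longleftrightarrow> isometry U \<and> surj U"

definition orth_proj :: "('a::complex_inner \<Rightarrow> 'a) \<Rightarrow> bool" where
  "orth_proj P \<longleftrightarrow> bounded_op P \<and> (\<forall>x. P (P x) = P x) \<and> (\<forall>x y. cinner (P x) y = cinner x (P y))"

definition defect_op :: "('a::complex_inner \<Rightarrow> 'a) \<Rightarrow> ('a \<Rightarrow> 'a) \<Rightarrow> 'a \<Rightarrow> 'a" where
  "defect_op V1 V2 x = x - V1 (adj V1 x) - V2 (adj V2 x) + V1 (V2 (adj V2 (adj V1 x)))"

definition csubspace :: "'a::complex_inner set \<Rightarrow> bool" where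
  "csubspace S \<longleftrightarrow> 0 \<in> S \<and> (\<forall>x\<in>S. \<forall>y\<in>S. x + y \<in> S) \<and> (\<forall>c. \<forall>x\<in>S. c *\<^sub>C x \<in> S)"

definition closed_subspace :: "'a::complex_inner set \<Rightarrow> bool" where
  "closed_subspace S \<longleftrightarrow> csubspace S \<and> closed S"

definition unitary_on :: "'a::complex_inner set \<Rightarrow> ('a \<Rightarrow> 'a) \<Rightarrow> bool" where
  "unitary_on K W \<longleftrightarrow> W ` K = K \<and>
     (\<forall>x\<in>K. \<forall>y\<in>K. W (x + y) = W x + W y) \<and> (\<forall>c. \<forall>x\<in>K. W (c *\<^sub>C x) = c *\<^sub>C W x) \<and>
     (\<forall>x\<in>K. \<forall>y\<in>K. cinner (W x) (W y) = cinner x y)"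

text \<open>\<open>H^2_D(S)\<close> for a closed subspace \<open>S\<close> of a Hilbert space, realised (via Taylor
  coefficients, a unitary identification) as the square-summable \<open>S\<close>-valued sequences.
  Multiplication by \<open>z\<close> is the unilateral shift; a constant operator \<open>A\<close> acts
  coefficientwise (\<open>I \<otimes> A\<close>).\<close>

definition H2 :: "'e::complex_inner set \<Rightarrow> (nat \<Rightarrow> 'e) set" where
  "H2 S = {f. (\<forall>n. f n \<in> S) \<and> summable (\<lambda>n. (norm (f n))\<^sup>2)}"

definition h2_inner :: "(nat \<Rightarrow> 'e::complex_inner) \<Rightarrow> (nat \<Rightarrow> 'e) \<Rightarrow> complex" where
  "h2_inner f g = (\<Sum>n. cinner (f n) (g n))"

definition Mz :: "(nat \<Rightarrow> 'e::complex_inner) \<Rightarrow> nat \<Rightarrow> 'e" where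
  "Mz f n = (case n of 0 \<Rightarrow> 0 | Suc m \<Rightarrow> f m)"

definition coeffwise :: "('e \<Rightarrow> 'e) \<Rightarrow> (nat \<Rightarrow> 'e) \<Rightarrow> nat \<Rightarrow> 'e" where
  "coeffwise A f n = A (f n)"

definition seq_add :: "(nat \<Rightarrow> 'e::complex_inner) \<Rightarrow> (nat \<Rightarrow> 'e) \<Rightarrow> nat \<Rightarrow> 'e" where
  "seq_add f g n = f n + g n"

definition seq_scale :: "complex \<Rightarrow> (nat \<Rightarrow> 'e::complex_inner) \<Rightarrow> nat \<Rightarrow> 'e" where
  "seq_scale c f n = c *\<^sub>C f n"

text \<open>Multiplication operators with the BCL symbols
  \<open>\<phi>1(z) = U*(P\<^sup>\<bottom> + zP)\<close> and \<open>\<phi>2(z) = (P + zP\<^sup>\<bottom>)U\<close>.\<close>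
definition M_phi1 :: "('e::complex_inner \<Rightarrow> 'e) \<Rightarrow> ('e \<Rightarrow> 'e) \<Rightarrow> (nat \<Rightarrow> 'e) \<Rightarrow> nat \<Rightarrow> 'e" where
  "M_phi1 P U f n = adj U ((f n - P (f n)) + P (Mz f n))"

definition M_phi2 :: "('e::complex_inner \<Rightarrow> 'e) \<Rightarrow> ('e \<Rightarrow> 'e) \<Rightarrow> (nat \<Rightarrow> 'e) \<Rightarrow> nat \<Rightarrow> 'e" where
  "M_phi2 P U f n = P (U (f n)) + (U (Mz f n) - P (U (Mz f n)))"

text \<open>\<open>(E,P,U)\<close> (with \<open>E\<close> the Hilbert space \<open>'e\<close>) is a BCL triple for \<open>(V1,V2)\<close> on
  \<open>'h\<close>: \<open>P\<close> is a projection, \<open>U\<close> a unitary on \<open>E\<close>, and \<open>'h = Hp \<oplus> Hu\<close> with both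
  summands reducing, \<open>(V1|Hp, V2|Hp)\<close> unitarily equivalent (via \<open>\<Phi>\<close>) to
  \<open>(M_\<phi>1, M_\<phi>2)\<close> on \<open>H^2(E)\<close>, and \<open>V1|Hu, V2|Hu\<close> unitaries.\<close>
definition BCL_triple ::
  "('h::chilbert \<Rightarrow> 'h) \<Rightarrow> ('h \<Rightarrow> 'h) \<Rightarrow> ('e::chilbert \<Rightarrow> 'e) \<Rightarrow> ('e \<Rightarrow> 'e) \<Rightarrow> bool" where
  "BCL_triple V1 V2 P U \<longleftrightarrow> orth_proj P \<and> unitary U \<and>
    (\<exists>Hp Hu (\<Phi> :: (nat \<Rightarrow> 'e) \<Rightarrow> 'h).
       closed_subspace Hp \<and> closed_subspace Hu \<and>
       (\<forall>a\<in>Hp. \<forall>b\<in>Hu. cinner a b = 0) \<and> (\<forall>x. \<exists>a\<in>Hp. \<exists>b\<in>Hu. x = a + b) \<and>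
       V1 ` Hp \<subseteq> Hp \<and> V2 ` Hp \<subseteq> Hp \<and> adj V1 ` Hp \<subseteq> Hp \<and> adj V2 ` Hp \<subseteq> Hp \<and>
       V1 ` Hu \<subseteq> Hu \<and> V2 ` Hu \<subseteq> Hu \<and> adj V1 ` Hu \<subseteq> Hu \<and> adj V2 ` Hu \<subseteq> Hu \<and>
       bij_betw \<Phi> (H2 UNIV) Hp \<and>
       (\<forall>f\<in>H2 UNIV. \<forall>g\<in>H2 UNIV. \<Phi> (seq_add f g) = \<Phi> f + \<Phi> g) \<and>
       (\<forall>c. \<forall>f\<in>H2 UNIV. \<Phi> (seq_scale c f) = c *\<^sub>C \<Phi> f) \<and>
       (\<forall>f\<in>H2 UNIV. \<forall>g\<in>H2 UNIV. cinner (\<Phi> f) (\<Phi> g) = h2_inner f g) \<and>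
       (\<forall>f\<in>H2 UNIV. V1 (\<Phi> f) = \<Phi> (M_phi1 P U f)) \<and>
       (\<forall>f\<in>H2 UNIV. V2 (\<Phi> f) = \<Phi> (M_phi2 P U f)) \<and>
       unitary_on Hu V1 \<and> unitary_on Hu V2)"

text \<open>Inner product and linear operations on
  \<open>(H^2 \<otimes> E1) \<oplus> (H^2 \<otimes> E2) \<oplus> K\<close>, elements represented as triples.\<close>
definition inner3 ::
  "(nat \<Rightarrow> 'e::complex_inner) \<times> (nat \<Rightarrow> 'e) \<times> 'k::complex_inner \<Rightarrow>
   (nat \<Rightarrow> 'e) \<times> (nat \<Rightarrow> 'e) \<times> 'k \<Rightarrow> complex" where
  "inner3 x y = (case x of (f1, f2, k) \<Rightarrow> case y of (g1, g2, l) \<Rightarrow>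
      h2_inner f1 g1 + h2_inner f2 g2 + cinner k l)"

definition add3 ::
  "(nat \<Rightarrow> 'e::complex_inner) \<times> (nat \<Rightarrow> 'e) \<times> 'k::complex_inner \<Rightarrow>
   (nat \<Rightarrow> 'e) \<times> (nat \<Rightarrow> 'e) \<times> 'k \<Rightarrow> (nat \<Rightarrow> 'e) \<times> (nat \<Rightarrow> 'e) \<times> 'k" where
  "add3 x y = (case x of (f1, f2, k) \<Rightarrow> case y of (g1, g2, l) \<Rightarrow>
      (seq_add f1 g1, seq_add f2 g2, k + l))"

definition scale3 ::
  "complex \<Rightarrow> (nat \<Rightarrow> 'e::complex_inner) \<times> (nat \<Rightarrow> 'e) \<times> 'k::complex_inner \<Rightarrow>
   (nat \<Rightarrow> 'e) \<times> (nat \<Rightarrow> 'e) \<times> 'k" where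
  "scale3 c x = (case x of (f1, f2, k) \<Rightarrow> (seq_scale c f1, seq_scale c f2, c *\<^sub>C k))"

definition unitary3 ::
  "((nat \<Rightarrow> 'e::complex_inner) \<times> (nat \<Rightarrow> 'e) \<times> 'k::complex_inner) set \<Rightarrow>
   ((nat \<Rightarrow> 'e) \<times> (nat \<Rightarrow> 'e) \<times> 'k \<Rightarrow> 'h::complex_inner) \<Rightarrow> bool" where
  "unitary3 D \<Psi> \<longleftrightarrow> bij_betw \<Psi> D UNIV \<and>
     (\<forall>x\<in>D. \<forall>y\<in>D. \<Psi> (add3 x y) = \<Psi> x + \<Psi> y) \<and>
     (\<forall>c. \<forall>x\<in>D. \<Psi> (scale3 c x) = c *\<^sub>C \<Psi> x) \<and>
     (\<forall>x\<in>D. \<forall>y\<in>D. cinner (\<Psi> x) (\<Psi> y) = inner3 x y)"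

end

theory Submission
  imports Defs
begin


lemma cinner_add_left: "cinner (x + y) z = cinner x z + cinner (y::'a::complex_inner) z"
  by (metis cinner_commute cinner_add_right complex_cnj_add)

lemma cinner_zero_right[simp]: "cinner (x::'a::complex_inner) 0 = 0"
  using cinner_add_right[of x 0 0] by simp

lemma cinner_zero_left[simp]: "cinner 0 (x::'a::complex_inner) = 0"
  using cinner_add_left[of 0 0 x] by simp

lemma cinner_diff_right: "cinner x (y - z) = cinner x y - cinner (x::'a::complex_inner) z"
  using cinner_add_right[of x "y - z" z] by (simp add: algebra_simps)

lemma cinner_diff_left: "cinner (x - y) z = cinner x z - cinner (y::'a::complex_inner) z"
  using cinner_add_left[of "x - y" y z] by (simp add: algebra_simps)

lemma cinner_scaleC_left: "cinner (a *\<^sub>C x) y = cnj a * cinner (x::'a::complex_inner) y"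
  by (metis cinner_commute cinner_scaleC_right complex_cnj_mult)

lemma norm_sq_cinner: "(norm (x::'a::complex_inner))\<^sup>2 = Re (cinner x x)"
  by (simp add: cinner_norm)

lemma cinner_self_zero: "cinner x x = 0 \<longleftrightarrow> (x::'a::complex_inner) = 0"
  by (simp add: cinner_norm)

lemma scaleC_zero_left[simp]: "0 *\<^sub>C (x::'a::complex_inner) = 0"
  using scaleR_scaleC[of 0 x] by simp

lemma scaleC_minus1: "(-1) *\<^sub>C (x::'a::complex_inner) = - x"
  using scaleR_scaleC[of "-1" x] by simp

lemma norm_scaleC_unit: assumes "cmod c = 1" shows "norm (c *\<^sub>C (x::'a::complex_inner)) = norm x"
proof -
  have "cnj c * c = 1" using assms
    by (metis complex_norm_square mult.commute of_real_1 power_one)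
  have "cinner (c *\<^sub>C x) (c *\<^sub>C x) = (cnj c * c) * cinner x x"
    by (simp add: cinner_scaleC_left cinner_scaleC_right mult.assoc)
  hence "(norm (c *\<^sub>C x))\<^sup>2 = (norm x)\<^sup>2"
    unfolding norm_sq_cinner using \<open>cnj c * c = 1\<close> by simp
  thus ?thesis by simp
qed

lemma norm_add_sq: "(norm (x + y))\<^sup>2 = (norm x)\<^sup>2 + (norm y)\<^sup>2 + 2 * Re (cinner x (y::'a::complex_inner))"
proof -
  have "Re (cinner y x) = Re (cinner x y)" by (subst cinner_commute) simp
  thus ?thesis by (simp add: norm_sq_cinner cinner_add_left cinner_add_right)
qed

lemma re_bound: "- 2 * Re (c * cinner x y) \<le> (norm x)\<^sup>2 + (norm (y::'a::complex_inner))\<^sup>2" if "cmod c = 1"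
proof -
  have "0 \<le> (norm (x + c *\<^sub>C y))\<^sup>2" by simp
  also have "\<dots> = (norm x)\<^sup>2 + (norm y)\<^sup>2 + 2 * Re (c * cinner x y)"
    by (simp add: norm_add_sq cinner_scaleC_right norm_scaleC_unit[OF that])
  finally show ?thesis by simp
qed

lemma cinner_bound: "cmod (cinner x y) \<le> (norm x)\<^sup>2 + (norm (y::'a::complex_inner))\<^sup>2"
proof -
  let ?z = "cinner x y" and ?S = "(norm x)\<^sup>2 + (norm y)\<^sup>2"
  have 1: "- 2 * Re ?z \<le> ?S" using re_bound[of 1 x y] by simp
  have 2: "2 * Re ?z \<le> ?S" using re_bound[of "-1" x y] by simp
  have 3: "2 * Im ?z \<le> ?S" using re_bound[of "\<i>" x y] by simp
  have 4: "- 2 * Im ?z \<le> ?S" using re_bound[of "-\<i>" x y] by simp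
  have "cmod ?z \<le> \<bar>Re ?z\<bar> + \<bar>Im ?z\<bar>" by (rule cmod_le)
  thus ?thesis using 1 2 3 4 by linarith
qed

lemma summable_cinner:
  assumes "summable (\<lambda>n. (norm (f n))\<^sup>2)" "summable (\<lambda>n. (norm (g n :: 'a::complex_inner))\<^sup>2)"
  shows "summable (\<lambda>n. cinner (f n) (g n))"
  by (rule summable_comparison_test'[OF summable_add[OF assms], of 0]) (rule cinner_bound)

lemma summable_bound:
  assumes "summable (\<lambda>n. (norm (a n))\<^sup>2)" "summable (\<lambda>n. (norm (b n :: 'b::real_normed_vector))\<^sup>2)"
    and "\<And>n. norm (F n :: 'c::real_normed_vector) \<le> norm (a n :: 'a::real_normed_vector) + norm (b n)"
  shows "summable (\<lambda>n. (norm (F n))\<^sup>2)"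
proof (rule summable_comparison_test'[OF summable_add[OF summable_mult[OF assms(1), of 2] summable_mult[OF assms(2), of 2]], of 0])
  fix n
  have "(norm (F n))\<^sup>2 \<le> (norm (a n) + norm (b n))\<^sup>2"
    using assms(3)[of n] by (simp add: power_mono)
  also have "\<dots> \<le> 2 * (norm (a n))\<^sup>2 + 2 * (norm (b n))\<^sup>2"
    by (smt (verit) sum_squares_bound power2_sum zero_le_power2 power2_diff)
  finally show "norm ((norm (F n))\<^sup>2) \<le> 2 * (norm (a n))\<^sup>2 + 2 * (norm (b n))\<^sup>2" by simp
qed

lemma adj_eq:
  fixes T :: "'a::complex_inner \<Rightarrow> 'b::complex_inner"
  assumes B: "\<forall>x y. cinner (T x) y = cinner x (B y)"
  shows "adj T = B"
proof
  fix y
  have A: "\<forall>x y. cinner (T x) y = cinner x (adj T y)"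
    unfolding adj_def by (rule someI[where x=B]) (rule B)
  define d where "d = adj T y - B y"
  have "cinner d d = cinner d (adj T y) - cinner d (B y)"
    unfolding d_def by (rule cinner_diff_right)
  also have "\<dots> = 0"
  proof -
    have "cinner d (adj T y) = cinner (T d) y" using A by simp
    also have "\<dots> = cinner d (B y)" using B by simp
    finally show ?thesis by simp
  qed
  finally show "adj T y = B y" unfolding d_def cinner_self_zero by simp
qed

lemma clinear_add: "clinear A \<Longrightarrow> A (x + y) = A x + A y"
  by (simp add: clinear_def)
lemma clinear_scale: "clinear A \<Longrightarrow> A (c *\<^sub>C x) = c *\<^sub>C A x"
  by (simp add: clinear_def)
lemma clinear_0: "clinear A \<Longrightarrow> A 0 = 0"
  using clinear_add[of A 0 0] by simp
lemma clinear_diff: "clinear A \<Longrightarrow> A (x - y) = A x - A y"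
  using clinear_add[of A "x - y" y] by (simp add: algebra_simps)

lemma isometry_clinear: "isometry V \<Longrightarrow> clinear V"
  by (simp add: isometry_def bounded_op_def)
lemma isometry_inner: "isometry V \<Longrightarrow> cinner (V x) (V y) = cinner x y"
  by (simp add: isometry_def)
lemma isometry_norm: "isometry V \<Longrightarrow> norm (V x) = norm x"
proof -
  assume "isometry V"
  hence "(norm (V x))\<^sup>2 = (norm x)\<^sup>2" by (simp add: norm_sq_cinner isometry_inner)
  thus ?thesis by simp
qed
lemma isometry_inj: "isometry V \<Longrightarrow> inj V"
proof (rule injI)
  fix x y assume V: "isometry V" and "V x = V y"
  hence "V (x - y) = 0" by (simp add: clinear_diff isometry_clinear)
  hence "norm (x - y) = 0" using isometry_norm[OF V, of "x - y"] by simp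
  thus "x = y" by simp
qed

lemma csubspace_diff: "csubspace S \<Longrightarrow> x \<in> S \<Longrightarrow> y \<in> S \<Longrightarrow> x - y \<in> S"
  unfolding csubspace_def using scaleC_minus1 by (metis diff_conv_add_uminus)

lemma Mz_0[simp]: "Mz f 0 = 0" by (simp add: Mz_def)
lemma Mz_Suc[simp]: "Mz f (Suc n) = f n" by (simp add: Mz_def)

lemma H2_UNIV: "f \<in> H2 UNIV \<longleftrightarrow> summable (\<lambda>n. (norm (f n))\<^sup>2)"
  by (simp add: H2_def)

lemma summable_Mz: "summable (\<lambda>n. (norm (f n))\<^sup>2) \<Longrightarrow> summable (\<lambda>n. (norm (Mz f n))\<^sup>2)"
  by (subst summable_Suc_iff[symmetric]) simp

lemma summable_shift: "summable (\<lambda>n. (norm (f n))\<^sup>2) \<Longrightarrow> summable (\<lambda>n. (norm (f (Suc n)))\<^sup>2)"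
  using summable_Suc_iff[of "\<lambda>n. (norm (f n))\<^sup>2"] by simp

lemma suminf_Mz_shift:
  assumes "summable (\<lambda>n. (norm (g n))\<^sup>2)" "summable (\<lambda>n. (norm (h n :: 'a::complex_inner))\<^sup>2)"
  shows "(\<Sum>n. cinner (Mz g n) (h n)) = (\<Sum>n. cinner (g n) (h (Suc n)))"
proof -
  have "summable (\<lambda>n. cinner (Mz g n) (h n))"
    by (rule summable_cinner[OF summable_Mz[OF assms(1)] assms(2)])
  from suminf_split_head[OF this] show ?thesis by simp
qed

lemma funpow_add_hom: "(\<And>x y. (f::'a::complex_inner\<Rightarrow>'a) (x + y) = f x + f y) \<Longrightarrow> (f ^^ n) (x + y) = (f ^^ n) x + (f ^^ n) y"
  by (induction n) auto
lemma funpow_scale_hom: "(\<And>x. (f::'a::complex_inner\<Rightarrow>'a) (c *\<^sub>C x) = c *\<^sub>C f x) \<Longrightarrow> (f ^^ n) (c *\<^sub>C x) = c *\<^sub>C (f ^^ n) x"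
  by (induction n) auto
lemma funpow_zero_hom: "(f::'a::complex_inner\<Rightarrow>'a) 0 = 0 \<Longrightarrow> (f ^^ n) 0 = 0"
  by (induction n) auto
lemma funpow_norm_hom: "(\<And>x. norm ((f::'a::complex_inner\<Rightarrow>'a) x) = norm x) \<Longrightarrow> norm ((f ^^ n) x) = norm x"
  by (induction n) auto
lemma funpow_inner_hom: "(\<And>x y. cinner ((f::'a::complex_inner\<Rightarrow>'a) x) (f y) = cinner x y) \<Longrightarrow> cinner ((f ^^ n) x) ((f ^^ n) y) = cinner x y"
  by (induction n) auto
lemma funpow_commute: "(\<And>x. (f::'a\<Rightarrow>'a) (g x) = g (f x)) \<Longrightarrow> f ((g ^^ n) x) = (g ^^ n) (f x)"
  by (induction n) auto
lemma funpow_inverse: "(\<And>x. (f::'a\<Rightarrow>'a) (g x) = x) \<Longrightarrow> (f ^^ n) ((g ^^ n) x) = x"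
proof (induction n arbitrary: x)
  case (Suc n)
  have "(f ^^ Suc n) ((g ^^ Suc n) x) = (f ^^ n) (f (g ((g ^^ n) x)))"
    by (simp add: funpow_swap1)
  also have "\<dots> = x" using Suc by simp
  finally show ?case .
qed simp




locale bcl =
  fixes V1 V2 :: "'h::chilbert \<Rightarrow> 'h" and P U :: "'e::chilbert \<Rightarrow> 'e"
    and Hp Hu :: "'h set" and \<Phi> :: "(nat \<Rightarrow> 'e) \<Rightarrow> 'h"
  assumes iso1: "isometry V1" and iso2: "isometry V2"
    and P: "orth_proj P" and U: "unitary U"
    and Hp: "closed_subspace Hp" and Hu: "closed_subspace Hu"
    and orth: "\<forall>a\<in>Hp. \<forall>b\<in>Hu. cinner a b = 0"
    and dec: "\<forall>x. \<exists>a\<in>Hp. \<exists>b\<in>Hu. x = a + b"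
    and bij: "bij_betw \<Phi> (H2 UNIV) Hp"
    and Phi_add: "\<forall>f\<in>H2 UNIV. \<forall>g\<in>H2 UNIV. \<Phi> (seq_add f g) = \<Phi> f + \<Phi> g"
    and Phi_scale: "\<forall>c. \<forall>f\<in>H2 UNIV. \<Phi> (seq_scale c f) = c *\<^sub>C \<Phi> f"
    and Phi_inner: "\<forall>f\<in>H2 UNIV. \<forall>g\<in>H2 UNIV. cinner (\<Phi> f) (\<Phi> g) = h2_inner f g"
    and Phi_V1: "\<forall>f\<in>H2 UNIV. V1 (\<Phi> f) = \<Phi> (M_phi1 P U f)"
    and Phi_V2: "\<forall>f\<in>H2 UNIV. V2 (\<Phi> f) = \<Phi> (M_phi2 P U f)"
    and uHu1: "unitary_on Hu V1" and uHu2: "unitary_on Hu V2"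
begin

lemma P_lin: "clinear P" using P by (simp add: orth_proj_def bounded_op_def)
lemma P_add: "P (x + y) = P x + P y" by (rule clinear_add[OF P_lin])
lemma P_diff: "P (x - y) = P x - P y" by (rule clinear_diff[OF P_lin])
lemma P_0[simp]: "P 0 = 0" by (rule clinear_0[OF P_lin])
lemma P_idem[simp]: "P (P x) = P x" using P by (simp add: orth_proj_def)
lemma P_sa: "cinner (P x) y = cinner x (P y)" using P by (simp add: orth_proj_def)
lemma P_Q[simp]: "P (x - P x) = 0" by (simp add: P_diff)

lemma orthPQ: "P a = a \<Longrightarrow> P b = 0 \<Longrightarrow> cinner a b = 0"
  by (metis P_sa cinner_zero_right)
lemma orthQP: "P a = a \<Longrightarrow> P b = 0 \<Longrightarrow> cinner b a = 0"
  by (metis orthPQ cinner_commute complex_cnj_zero)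

lemma norm_PQ: "(norm x)\<^sup>2 = (norm (P x))\<^sup>2 + (norm (x - P x))\<^sup>2"
proof -
  have "x = P x + (x - P x)" by simp
  hence "(norm x)\<^sup>2 = (norm (P x + (x - P x)))\<^sup>2" by simp
  also have "\<dots> = (norm (P x))\<^sup>2 + (norm (x - P x))\<^sup>2"
    by (simp only: norm_add_sq orthPQ[of "P x" "x - P x", simplified]) simp
  finally show ?thesis .
qed
lemma norm_P: "norm (P x) \<le> norm x"
  using norm_PQ[of x] by (metis abs_norm_cancel le_add_same_cancel1 real_le_rsqrt zero_le_power2 real_sqrt_abs)
lemma norm_Q: "norm (x - P x) \<le> norm x"
  using norm_PQ[of x] by (metis abs_norm_cancel le_add_same_cancel2 real_le_rsqrt zero_le_power2 real_sqrt_abs)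

lemma U_iso: "isometry U" using U by (simp add: unitary_def)
lemma U_lin: "clinear U" by (rule isometry_clinear[OF U_iso])
lemma U_add: "U (x + y) = U x + U y" by (rule clinear_add[OF U_lin])
lemma U_diff: "U (x - y) = U x - U y" by (rule clinear_diff[OF U_lin])
lemma U_scale: "U (c *\<^sub>C x) = c *\<^sub>C U x" by (rule clinear_scale[OF U_lin])
lemma U_0[simp]: "U 0 = 0" by (rule clinear_0[OF U_lin])
lemma U_inner: "cinner (U x) (U y) = cinner x y" by (rule isometry_inner[OF U_iso])
lemma U_norm[simp]: "norm (U x) = norm x" by (rule isometry_norm[OF U_iso])
lemma U_surj: "surj U" using U by (simp add: unitary_def)
lemma U_inj: "inj U" by (rule isometry_inj[OF U_iso])

lemma adjU: "adj U = inv U"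
proof (rule adj_eq, intro allI)
  fix x y
  have "cinner (U x) y = cinner (U x) (U (inv U y))" by (simp add: surj_f_inv_f[OF U_surj])
  also have "\<dots> = cinner x (inv U y)" by (rule U_inner)
  finally show "cinner (U x) y = cinner x (inv U y)" .
qed

lemma UUa[simp]: "U (adj U y) = y" by (simp add: adjU surj_f_inv_f[OF U_surj])
lemma UaU[simp]: "adj U (U x) = x" by (simp add: adjU inv_f_f[OF U_inj])
lemma U_eq_iff: "U x = U y \<longleftrightarrow> x = y" using U_inj by (auto dest: injD)
lemma U_left: "cinner (U x) y = cinner x (adj U y)"
  by (metis UUa U_inner)
lemma Ua_left: "cinner (adj U x) y = cinner x (U y)"
  by (metis U_left cinner_commute)
lemma Ua_add: "adj U (x + y) = adj U x + adj U y"
  by (simp add: U_eq_iff[symmetric] U_add)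
lemma Ua_scale: "adj U (c *\<^sub>C x) = c *\<^sub>C adj U x"
  by (simp add: U_eq_iff[symmetric] U_scale)
lemma Ua_0[simp]: "adj U 0 = 0"
  by (simp add: U_eq_iff[symmetric])
lemma Ua_diff: "adj U (x - y) = adj U x - adj U y"
  by (simp add: U_eq_iff[symmetric] U_diff)
lemma Ua_norm[simp]: "norm (adj U x) = norm x"
  by (metis UUa U_norm)
lemma Ua_inner: "cinner (adj U x) (adj U y) = cinner x y"
  by (metis UUa U_inner)

lemma orth': "a \<in> Hp \<Longrightarrow> b \<in> Hu \<Longrightarrow> cinner b a = 0"
  using orth by (metis cinner_commute complex_cnj_zero)
lemma HpHu0: "z \<in> Hp \<Longrightarrow> z \<in> Hu \<Longrightarrow> z = 0"
  using orth cinner_self_zero by blast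
lemma Hp_sub: "csubspace Hp" using Hp by (simp add: closed_subspace_def)
lemma Hu_sub: "csubspace Hu" using Hu by (simp add: closed_subspace_def)
lemma dec_unique:
  assumes "a \<in> Hp" "a' \<in> Hp" "b \<in> Hu" "b' \<in> Hu" "a + b = a' + b'"
  shows "a = a' \<and> b = b'"
proof -
  have "a - a' = b' - b" using assms(5) by (simp add: algebra_simps)
  moreover have "a - a' \<in> Hp" by (rule csubspace_diff[OF Hp_sub assms(1,2)])
  moreover have "b' - b \<in> Hu" by (rule csubspace_diff[OF Hu_sub assms(4,3)])
  ultimately have "a - a' = 0" using HpHu0 by metis
  thus ?thesis using assms(5) by simp
qed

definition dp :: "'h \<Rightarrow> 'h" where "dp x = (SOME a. a \<in> Hp \<and> x - a \<in> Hu)"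
lemma dp_mem: "dp x \<in> Hp \<and> x - dp x \<in> Hu"
proof -
  obtain a b where "a \<in> Hp" "b \<in> Hu" "x = a + b" using dec by blast
  hence "a \<in> Hp \<and> x - a \<in> Hu" by simp
  thus ?thesis unfolding dp_def by (rule someI)
qed
lemma inner_dec: "a \<in> Hp \<Longrightarrow> a' \<in> Hp \<Longrightarrow> b \<in> Hu \<Longrightarrow> b' \<in> Hu \<Longrightarrow>
   cinner (a + b) (a' + b') = cinner a a' + cinner b b'"
  by (simp add: cinner_add_left cinner_add_right orth orth')

lemma Phi_mem: "f \<in> H2 UNIV \<Longrightarrow> \<Phi> f \<in> Hp" using bij by (auto simp: bij_betw_def)
lemma Phi_inj: "f \<in> H2 UNIV \<Longrightarrow> g \<in> H2 UNIV \<Longrightarrow> \<Phi> f = \<Phi> g \<Longrightarrow> f = g"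
  using bij by (auto simp: bij_betw_def dest: inj_onD)
definition cf :: "'h \<Rightarrow> nat \<Rightarrow> 'e" where "cf x = inv_into (H2 UNIV) \<Phi> (dp x)"
lemma cf_mem: "cf x \<in> H2 UNIV"
  unfolding cf_def using bij dp_mem by (metis bij_betw_def inv_into_into)
lemma Phi_cf: "\<Phi> (cf x) = dp x"
  unfolding cf_def using bij dp_mem by (metis bij_betw_def f_inv_into_f)
lemma x_dec: "x = \<Phi> (cf x) + (x - dp x)" by (simp add: Phi_cf)
lemma cf_eq: "f \<in> H2 UNIV \<Longrightarrow> b \<in> Hu \<Longrightarrow> cf (\<Phi> f + b) = f"
proof -
  assume f: "f \<in> H2 UNIV" and b: "b \<in> Hu"
  let ?x = "\<Phi> f + b"
  have "\<Phi> (cf ?x) + (?x - dp ?x) = \<Phi> f + b" by (simp add: Phi_cf)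
  hence "\<Phi> (cf ?x) = \<Phi> f" using dec_unique[OF Phi_mem[OF cf_mem] Phi_mem[OF f] _ b] dp_mem by blast
  thus ?thesis using Phi_inj[OF cf_mem f] by simp
qed
lemma dp_eq: "a \<in> Hp \<Longrightarrow> b \<in> Hu \<Longrightarrow> dp (a + b) = a"
  using dec_unique[of "dp (a+b)" a "a + b - dp (a + b)" b] dp_mem by force

lemma zero_H2: "(\<lambda>n. 0) \<in> H2 UNIV" by (simp add: H2_def)
lemma Phi_zero: "\<Phi> (\<lambda>n. 0) = 0"
proof -
  have "seq_add (\<lambda>n. 0) (\<lambda>n. 0) = (\<lambda>n. (0::'e))" by (simp add: seq_add_def fun_eq_iff)
  hence "\<Phi> (\<lambda>n. 0) = \<Phi> (\<lambda>n. 0) + \<Phi> (\<lambda>n. 0)" using Phi_add zero_H2 by metis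
  thus ?thesis by simp
qed

end



context bcl begin

lemma V1_lin: "clinear V1" by (rule isometry_clinear[OF iso1])
lemma V2_lin: "clinear V2" by (rule isometry_clinear[OF iso2])

lemma H2_sum_bound:
  "a \<in> H2 UNIV \<Longrightarrow> b \<in> H2 UNIV \<Longrightarrow> (\<And>n. norm (F n) \<le> norm (a n) + norm (b n)) \<Longrightarrow> F \<in> H2 UNIV"
  unfolding H2_UNIV by (rule summable_bound)

lemma Mz_H2: "g \<in> H2 UNIV \<Longrightarrow> Mz g \<in> H2 UNIV"
  unfolding H2_UNIV by (rule summable_Mz)
lemma shift_H2: "g \<in> H2 UNIV \<Longrightarrow> (\<lambda>n. g (Suc n)) \<in> H2 UNIV"
  unfolding H2_UNIV by (rule summable_shift)

lemma M1_H2: "g \<in> H2 UNIV \<Longrightarrow> M_phi1 P U g \<in> H2 UNIV"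
proof (rule H2_sum_bound[of g "Mz g"])
  fix n
  show "norm (M_phi1 P U g n) \<le> norm (g n) + norm (Mz g n)"
    unfolding M_phi1_def Ua_norm
    by (rule order_trans[OF norm_triangle_ineq add_mono[OF norm_Q norm_P]])
qed (auto intro: Mz_H2)

lemma M2_H2: "g \<in> H2 UNIV \<Longrightarrow> M_phi2 P U g \<in> H2 UNIV"
proof (rule H2_sum_bound[of g "Mz g"])
  fix n
  show "norm (M_phi2 P U g n) \<le> norm (g n) + norm (Mz g n)"
    unfolding M_phi2_def
    by (rule order_trans[OF norm_triangle_ineq add_mono[OF order_trans[OF norm_P] order_trans[OF norm_Q]]]) simp_all
qed (auto intro: Mz_H2)

definition A1 :: "(nat \<Rightarrow> 'e) \<Rightarrow> nat \<Rightarrow> 'e" where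
  "A1 f n = (U (f n) - P (U (f n))) + P (U (f (Suc n)))"
definition A2 :: "(nat \<Rightarrow> 'e) \<Rightarrow> nat \<Rightarrow> 'e" where
  "A2 f n = adj U (P (f n)) + adj U (f (Suc n) - P (f (Suc n)))"

lemma A1_H2: "f \<in> H2 UNIV \<Longrightarrow> A1 f \<in> H2 UNIV"
proof (rule H2_sum_bound[of f "\<lambda>n. f (Suc n)"])
  fix n
  show "norm (A1 f n) \<le> norm (f n) + norm (f (Suc n))"
    unfolding A1_def
    by (rule order_trans[OF norm_triangle_ineq add_mono[OF order_trans[OF norm_Q] order_trans[OF norm_P]]]) simp_all
qed (auto intro: shift_H2)

lemma A2_H2: "f \<in> H2 UNIV \<Longrightarrow> A2 f \<in> H2 UNIV"
proof (rule H2_sum_bound[of f "\<lambda>n. f (Suc n)"])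
  fix n
  show "norm (A2 f n) \<le> norm (f n) + norm (f (Suc n))"
    unfolding A2_def
    by (rule order_trans[OF norm_triangle_ineq add_mono]) (simp_all add: norm_P norm_Q)
qed (auto intro: shift_H2)

lemma sc: "f \<in> H2 UNIV \<Longrightarrow> g \<in> H2 UNIV \<Longrightarrow> summable (\<lambda>n. cinner (f n) (g n))"
  unfolding H2_UNIV by (rule summable_cinner)

lemma QU_H2: "f \<in> H2 UNIV \<Longrightarrow> (\<lambda>n. U (f n) - P (U (f n))) \<in> H2 UNIV"
  by (rule H2_sum_bound[of f f]) (auto intro: order_trans[OF norm_Q])
lemma PU_H2: "f \<in> H2 UNIV \<Longrightarrow> (\<lambda>n. P (U (f n))) \<in> H2 UNIV"
  by (rule H2_sum_bound[of f f]) (auto intro: order_trans[OF norm_P])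
lemma UaP_H2: "f \<in> H2 UNIV \<Longrightarrow> (\<lambda>n. adj U (P (f n))) \<in> H2 UNIV"
  by (rule H2_sum_bound[of f f]) (auto intro: order_trans[OF norm_P])
lemma UaQ_H2: "f \<in> H2 UNIV \<Longrightarrow> (\<lambda>n. adj U (f n - P (f n))) \<in> H2 UNIV"
  by (rule H2_sum_bound[of f f]) (auto intro: order_trans[OF norm_Q])

lemma h2_M1: assumes f: "f \<in> H2 UNIV" and g: "g \<in> H2 UNIV"
  shows "h2_inner (M_phi1 P U g) f = h2_inner g (A1 f)"
proof -
  have t: "cinner (M_phi1 P U g n) (f n) =
     cinner (g n) (U (f n) - P (U (f n))) + cinner (Mz g n) (P (U (f n)))" for n
    unfolding M_phi1_def Ua_left cinner_add_left cinner_diff_left cinner_diff_right P_sa ..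
  have "h2_inner (M_phi1 P U g) f =
     (\<Sum>n. cinner (g n) (U (f n) - P (U (f n)))) + (\<Sum>n. cinner (Mz g n) (P (U (f n))))"
    unfolding h2_inner_def t
    by (rule suminf_add[symmetric]) (auto intro!: sc g QU_H2 f Mz_H2 PU_H2)
  also have "(\<Sum>n. cinner (Mz g n) (P (U (f n)))) = (\<Sum>n. cinner (g n) (P (U (f (Suc n)))))"
    by (rule suminf_Mz_shift) (use g PU_H2[OF f] in \<open>simp_all add: H2_UNIV\<close>)
  also have "(\<Sum>n. cinner (g n) (U (f n) - P (U (f n)))) + \<dots> = h2_inner g (A1 f)"
    unfolding h2_inner_def A1_def cinner_add_right
    by (rule suminf_add) (auto intro!: sc g QU_H2 f shift_H2 PU_H2
        simp del: P_Q intro: PU_H2[OF shift_H2[OF f], simplified])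
  finally show ?thesis .
qed

lemma h2_M2: assumes f: "f \<in> H2 UNIV" and g: "g \<in> H2 UNIV"
  shows "h2_inner (M_phi2 P U g) f = h2_inner g (A2 f)"
proof -
  have t: "cinner (M_phi2 P U g n) (f n) =
     cinner (g n) (adj U (P (f n))) + cinner (Mz g n) (adj U (f n - P (f n)))" for n
    unfolding M_phi2_def cinner_add_left cinner_diff_left P_sa U_left cinner_diff_right Ua_diff ..
  have "h2_inner (M_phi2 P U g) f =
     (\<Sum>n. cinner (g n) (adj U (P (f n)))) + (\<Sum>n. cinner (Mz g n) (adj U (f n - P (f n))))"
    unfolding h2_inner_def t
    by (rule suminf_add[symmetric]) (auto intro!: sc g UaP_H2 f Mz_H2 UaQ_H2)
  also have "(\<Sum>n. cinner (Mz g n) (adj U (f n - P (f n)))) = (\<Sum>n. cinner (g n) (adj U (f (Suc n) - P (f (Suc n)))))"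
    by (rule suminf_Mz_shift) (use g UaQ_H2[OF f] in \<open>simp_all add: H2_UNIV\<close>)
  also have "(\<Sum>n. cinner (g n) (adj U (P (f n)))) + \<dots> = h2_inner g (A2 f)"
    unfolding h2_inner_def A2_def cinner_add_right
    by (rule suminf_add) (auto intro!: sc g UaP_H2 f intro: UaQ_H2[OF shift_H2[OF f], simplified])
  finally show ?thesis .
qed

end



context bcl begin

lemma adj_generic:
  assumes iso: "isometry V" and uV: "unitary_on Hu V"
    and VM: "\<And>f. f \<in> H2 UNIV \<Longrightarrow> V (\<Phi> f) = \<Phi> (M f)"
    and MH: "\<And>f. f \<in> H2 UNIV \<Longrightarrow> M f \<in> H2 UNIV"
    and AH: "\<And>f. f \<in> H2 UNIV \<Longrightarrow> A f \<in> H2 UNIV"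
    and MA: "\<And>f g. f \<in> H2 UNIV \<Longrightarrow> g \<in> H2 UNIV \<Longrightarrow> h2_inner (M g) f = h2_inner g (A f)"
  shows "adj V = (\<lambda>x. \<Phi> (A (cf x)) + inv_into Hu V (x - dp x))"
proof (rule adj_eq, intro allI)
  fix y x
  have VHu: "V ` Hu = Hu" using uV by (simp add: unitary_on_def)
  have Vlin: "clinear V" by (rule isometry_clinear[OF iso])
  define g c f b where "g = cf y" and "c = y - dp y" and "f = cf x" and "b = x - dp x"
  have g: "g \<in> H2 UNIV" and f: "f \<in> H2 UNIV" unfolding g_def f_def by (rule cf_mem)+
  have c: "c \<in> Hu" and b: "b \<in> Hu" unfolding c_def b_def using dp_mem by blast+
  define b' where "b' = inv_into Hu V b"
  have b': "b' \<in> Hu" "V b' = b" unfolding b'_def using b VHu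
    by (metis inv_into_into, metis f_inv_into_f)
  have Vc: "V c \<in> Hu" using c VHu by blast
  have y: "y = \<Phi> g + c" and x: "x = \<Phi> f + b" unfolding g_def c_def f_def b_def by (rule x_dec)+
  have "cinner (V y) x = cinner (\<Phi> (M g) + V c) (\<Phi> f + b)"
    using y x by (simp add: clinear_add[OF Vlin] VM[OF g])
  also have "\<dots> = h2_inner (M g) f + cinner (V c) (V b')"
    by (simp add: inner_dec Phi_mem MH g f Vc b Phi_inner b')
  also have "\<dots> = h2_inner g (A f) + cinner c b'"
    by (simp add: MA f g isometry_inner[OF iso])
  also have "\<dots> = cinner (\<Phi> g + c) (\<Phi> (A f) + b')"
    by (simp add: inner_dec Phi_mem AH g f c b' Phi_inner)
  finally show "cinner (V y) x = cinner y (\<Phi> (A (cf x)) + inv_into Hu V (x - dp x))"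
    using y unfolding f_def b_def b'_def by simp
qed

lemma adjV1: "adj V1 = (\<lambda>x. \<Phi> (A1 (cf x)) + inv_into Hu V1 (x - dp x))"
  by (rule adj_generic[OF iso1 uHu1, where M="M_phi1 P U" and A=A1]) (simp_all add: Phi_V1 M1_H2 A1_H2 h2_M1)
lemma adjV2: "adj V2 = (\<lambda>x. \<Phi> (A2 (cf x)) + inv_into Hu V2 (x - dp x))"
  by (rule adj_generic[OF iso2 uHu2, where M="M_phi2 P U" and A=A2]) (simp_all add: Phi_V2 M2_H2 A2_H2 h2_M2)

definition delta :: "'e \<Rightarrow> nat \<Rightarrow> 'e" where "delta e n = (if n = 0 then e else 0)"

lemma delta_H2: "delta e \<in> H2 UNIV"
proof -
  have "summable (\<lambda>n. (norm (delta e n))\<^sup>2)"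
    by (rule summable_finite[of "{0}"]) (auto simp: delta_def)
  thus ?thesis by (simp add: H2_UNIV)
qed

lemma inv_V_0: assumes iso: "isometry V" and uV: "unitary_on Hu V" shows "inv_into Hu V 0 = 0"
proof -
  have VHu: "V ` Hu = Hu" using uV by (simp add: unitary_on_def)
  have "0 \<in> Hu" using Hu_sub by (simp add: csubspace_def)
  hence "V (inv_into Hu V 0) = 0" "inv_into Hu V 0 \<in> Hu" using VHu by (metis f_inv_into_f, metis inv_into_into)
  moreover have "V 0 = 0" by (rule clinear_0[OF isometry_clinear[OF iso]])
  ultimately show ?thesis using isometry_inj[OF iso] by (metis injD)
qed

lemma adjV1_delta: "adj V1 (\<Phi> (delta e)) = \<Phi> (A1 (delta e))"
proof -
  have "0 \<in> Hu" using Hu_sub by (simp add: csubspace_def)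
  hence "cf (\<Phi> (delta e)) = delta e" "dp (\<Phi> (delta e)) = \<Phi> (delta e)"
    using cf_eq[OF delta_H2, of 0] dp_eq[OF Phi_mem[OF delta_H2], of 0] by simp_all
  thus ?thesis by (simp add: adjV1 inv_V_0[OF iso1 uHu1])
qed
lemma adjV2_delta: "adj V2 (\<Phi> (delta e)) = \<Phi> (A2 (delta e))"
proof -
  have "0 \<in> Hu" using Hu_sub by (simp add: csubspace_def)
  hence "cf (\<Phi> (delta e)) = delta e" "dp (\<Phi> (delta e)) = \<Phi> (delta e)"
    using cf_eq[OF delta_H2, of 0] dp_eq[OF Phi_mem[OF delta_H2], of 0] by simp_all
  thus ?thesis by (simp add: adjV2 inv_V_0[OF iso2 uHu2])
qed

lemma A1_delta: "A1 (delta e) = delta (U e - P (U e))"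
  by (auto simp: A1_def delta_def fun_eq_iff)
lemma A2_delta: "A2 (delta e) = delta (adj U (P e))"
  by (auto simp: A2_def delta_def fun_eq_iff)
lemma M1_delta: "P a = 0 \<Longrightarrow> M_phi1 P U (delta a) = delta (adj U a)"
  by (auto simp: M_phi1_def delta_def fun_eq_iff Mz_def split: nat.splits)
lemma M2_delta: "P (U b) = U b \<Longrightarrow> M_phi2 P U (delta b) = delta (U b)"
  by (auto simp: M_phi2_def delta_def fun_eq_iff Mz_def split: nat.splits)

lemma delta_0: "delta 0 = (\<lambda>n. 0)" by (simp add: delta_def fun_eq_iff)

lemma defect_consequence:
  assumes def0: "\<forall>x. defect_op V1 V2 x = 0"
  shows "U (e - P e) = U e - P (U e)"
proof -
  let ?a = "U e - P (U e)"
  have Pa: "P ?a = 0" by simp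
  have 1: "adj V1 (\<Phi> (delta e)) = \<Phi> (delta ?a)" by (simp add: adjV1_delta A1_delta)
  have 2: "V1 (adj V1 (\<Phi> (delta e))) = \<Phi> (delta (adj U ?a))"
    by (simp add: 1 Phi_V1 delta_H2 M1_delta)
  have 3: "V2 (adj V2 (\<Phi> (delta e))) = \<Phi> (delta (P e))"
    by (simp add: adjV2_delta A2_delta Phi_V2 delta_H2 M2_delta)
  have 4: "adj V2 (adj V1 (\<Phi> (delta e))) = 0"
    by (simp add: 1 adjV2_delta A2_delta delta_0 Phi_zero)
  have "V1 (V2 0) = 0" by (simp add: clinear_0 V1_lin V2_lin)
  moreover have "\<Phi> (delta e) - V1 (adj V1 (\<Phi> (delta e))) - V2 (adj V2 (\<Phi> (delta e)))
      + V1 (V2 (adj V2 (adj V1 (\<Phi> (delta e))))) = 0"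
    using def0 by (simp add: defect_op_def)
  ultimately have "\<Phi> (delta e) - \<Phi> (delta (adj U ?a)) - \<Phi> (delta (P e)) = 0"
    by (simp only: 2 3 4) simp
  hence "\<Phi> (delta e) = \<Phi> (seq_add (delta (adj U ?a)) (delta (P e)))"
    by (simp add: Phi_add delta_H2 algebra_simps)
  moreover have sH: "seq_add (delta (adj U ?a)) (delta (P e)) \<in> H2 UNIV"
    by (rule H2_sum_bound[OF delta_H2[of "adj U ?a"] delta_H2[of "P e"]]) (simp add: seq_add_def norm_triangle_ineq)
  ultimately have "delta e = seq_add (delta (adj U ?a)) (delta (P e))"
    using Phi_inj[OF delta_H2 sH] by blast
  hence "delta e 0 = seq_add (delta (adj U ?a)) (delta (P e)) 0" by simp
  hence "e = adj U ?a + P e" by (simp add: seq_add_def delta_def)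
  hence "e - P e = adj U ?a" by (simp add: algebra_simps)
  thus ?thesis by simp
qed

lemma PU_comm: assumes def0: "\<forall>x. defect_op V1 V2 x = 0" shows "P (U e) = U (P e)"
  using defect_consequence[OF def0, of e] by (simp add: U_diff)

end



context bcl begin

definition J :: "(nat \<Rightarrow> 'e) \<Rightarrow> (nat \<Rightarrow> 'e) \<Rightarrow> nat \<Rightarrow> 'e" where
  "J f1 f2 n = (adj U ^^ n) (f1 n) + (U ^^ n) (f2 n)"

lemma Upow_add: "(U ^^ n) (x + y) = (U ^^ n) x + (U ^^ n) y" by (rule funpow_add_hom) (rule U_add)
lemma Uapow_add: "(adj U ^^ n) (x + y) = (adj U ^^ n) x + (adj U ^^ n) y" by (rule funpow_add_hom) (rule Ua_add)
lemma Upow_scale: "(U ^^ n) (c *\<^sub>C x) = c *\<^sub>C (U ^^ n) x" by (rule funpow_scale_hom) (rule U_scale)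
lemma Uapow_scale: "(adj U ^^ n) (c *\<^sub>C x) = c *\<^sub>C (adj U ^^ n) x" by (rule funpow_scale_hom) (rule Ua_scale)
lemma Upow_0[simp]: "(U ^^ n) 0 = 0" by (rule funpow_zero_hom) simp
lemma Uapow_0[simp]: "(adj U ^^ n) 0 = 0" by (rule funpow_zero_hom) simp
lemma Upow_norm[simp]: "norm ((U ^^ n) x) = norm x" by (rule funpow_norm_hom) simp
lemma Uapow_norm[simp]: "norm ((adj U ^^ n) x) = norm x" by (rule funpow_norm_hom) simp
lemma Upow_inner: "cinner ((U ^^ n) x) ((U ^^ n) y) = cinner x y" by (rule funpow_inner_hom) (rule U_inner)
lemma Uapow_inner: "cinner ((adj U ^^ n) x) ((adj U ^^ n) y) = cinner x y" by (rule funpow_inner_hom) (rule Ua_inner)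
lemma UUapow[simp]: "(U ^^ n) ((adj U ^^ n) x) = x" by (rule funpow_inverse) simp
lemma UaUpow[simp]: "(adj U ^^ n) ((U ^^ n) x) = x" by (rule funpow_inverse) simp

lemma rangeP: "x \<in> range P \<longleftrightarrow> P x = x"
proof
  assume "x \<in> range P" then obtain y where "x = P y" by auto
  thus "P x = x" by simp
next
  assume "P x = x" thus "x \<in> range P" by (metis rangeI)
qed
lemma rangeQ: "x \<in> range (\<lambda>x. x - P x) \<longleftrightarrow> P x = 0"
proof
  assume "x \<in> range (\<lambda>x. x - P x)" then obtain y where "x = y - P y" by auto
  thus "P x = 0" by simp
next
  assume "P x = 0" hence "x = x - P x" by simp
  thus "x \<in> range (\<lambda>x. x - P x)" by (metis rangeI)
qed

lemma H2P: "f \<in> H2 (range P) \<longleftrightarrow> (\<forall>n. P (f n) = f n) \<and> f \<in> H2 UNIV"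
  by (simp add: H2_def rangeP)
lemma H2Q: "f \<in> H2 (range (\<lambda>x. x - P x)) \<longleftrightarrow> (\<forall>n. P (f n) = 0) \<and> f \<in> H2 UNIV"
  by (simp add: H2_def rangeQ)

lemma J_H2: "f1 \<in> H2 UNIV \<Longrightarrow> f2 \<in> H2 UNIV \<Longrightarrow> J f1 f2 \<in> H2 UNIV"
  by (rule H2_sum_bound[of f1 f2]) (auto simp: J_def intro: order_trans[OF norm_triangle_ineq])

context
  assumes def0: "\<forall>x. defect_op V1 V2 x = 0"
begin

lemma PU: "P (U x) = U (P x)" by (rule PU_comm[OF def0])
lemma PUa: "P (adj U x) = adj U (P x)"
  by (metis PU UUa UaU)
lemma PUpow: "P ((U ^^ n) x) = (U ^^ n) (P x)" by (rule funpow_commute) (rule PU)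
lemma PUapow: "P ((adj U ^^ n) x) = (adj U ^^ n) (P x)" by (rule funpow_commute) (rule PUa)

lemma P_J: "\<forall>n. P (f1 n) = f1 n \<Longrightarrow> \<forall>n. P (f2 n) = 0 \<Longrightarrow> P (J f1 f2 n) = (adj U ^^ n) (f1 n)"
  by (simp add: J_def P_add PUpow PUapow)

lemma part1: "U ` range P = range P"
proof
  show "U ` range P \<subseteq> range P" by (auto simp: PU[symmetric])
  show "range P \<subseteq> U ` range P"
  proof
    fix x assume "x \<in> range P"
    hence "P x = x" by auto
    hence "adj U x = P (adj U x)" by (simp add: PUa)
    hence "adj U x \<in> range P" by (metis rangeI)
    thus "x \<in> U ` range P" by (metis UUa imageI)
  qed
qed

lemma part2: "U ` range (\<lambda>x. x - P x) = range (\<lambda>x. x - P x)"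
proof
  show "U ` range (\<lambda>x. x - P x) \<subseteq> range (\<lambda>x. x - P x)"
  proof
    fix y assume "y \<in> U ` range (\<lambda>x. x - P x)"
    then obtain x where "y = U (x - P x)" by auto
    hence "y = U x - P (U x)" by (simp add: U_diff PU)
    thus "y \<in> range (\<lambda>x. x - P x)" by auto
  qed
  show "range (\<lambda>x. x - P x) \<subseteq> U ` range (\<lambda>x. x - P x)"
  proof
    fix y assume "y \<in> range (\<lambda>x. x - P x)"
    then obtain x where "y = x - P x" by auto
    hence "adj U y = adj U x - P (adj U x)" by (simp add: Ua_diff PUa)
    hence "adj U y \<in> range (\<lambda>x. x - P x)" by auto
    thus "y \<in> U ` range (\<lambda>x. x - P x)" by (metis UUa imageI)
  qed
qed

lemma h2_J:
  assumes f1: "f1 \<in> H2 (range P)" and f2: "f2 \<in> H2 (range (\<lambda>x. x - P x))"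
    and g1: "g1 \<in> H2 (range P)" and g2: "g2 \<in> H2 (range (\<lambda>x. x - P x))"
  shows "h2_inner (J f1 f2) (J g1 g2) = h2_inner f1 g1 + h2_inner f2 g2"
proof -
  have t: "cinner (J f1 f2 n) (J g1 g2 n) = cinner (f1 n) (g1 n) + cinner (f2 n) (g2 n)" for n
  proof -
    have a: "P ((adj U ^^ n) (f1 n)) = (adj U ^^ n) (f1 n)" "P ((adj U ^^ n) (g1 n)) = (adj U ^^ n) (g1 n)"
      using f1 g1 by (simp_all add: H2P PUapow)
    have b: "P ((U ^^ n) (f2 n)) = 0" "P ((U ^^ n) (g2 n)) = 0"
      using f2 g2 by (simp_all add: H2Q PUpow)
    show ?thesis unfolding J_def cinner_add_left cinner_add_right
      by (simp add: orthPQ[OF a(1) b(2)] orthQP[OF a(2) b(1)] Upow_inner Uapow_inner)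
  qed
  show ?thesis unfolding h2_inner_def t
    by (rule suminf_add[symmetric]) (use f1 f2 g1 g2 in \<open>auto simp: H2P H2Q intro!: sc\<close>)
qed

lemma M1_J: "\<forall>n. P (f1 n) = f1 n \<Longrightarrow> \<forall>n. P (f2 n) = 0 \<Longrightarrow>
  M_phi1 P U (J f1 f2) = J (Mz f1) (coeffwise (adj U) f2)"
proof (rule ext)
  fix n assume h1: "\<forall>n. P (f1 n) = f1 n" and h2: "\<forall>n. P (f2 n) = 0"
  show "M_phi1 P U (J f1 f2) n = J (Mz f1) (coeffwise (adj U) f2) n"
  proof (cases n)
    case 0 thus ?thesis using P_J[OF h1 h2, of 0] by (simp add: M_phi1_def J_def coeffwise_def)
  next
    case (Suc m)
    have "M_phi1 P U (J f1 f2) n = adj U ((U ^^ Suc m) (f2 (Suc m)) + (adj U ^^ m) (f1 m))"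
      using Suc P_J[OF h1 h2, of n] P_J[OF h1 h2, of m] by (simp add: M_phi1_def J_def)
    also have "\<dots> = (U ^^ m) (f2 (Suc m)) + (adj U ^^ Suc m) (f1 m)"
      by (simp add: Ua_add)
    also have "\<dots> = J (Mz f1) (coeffwise (adj U) f2) n"
      using Suc by (simp add: J_def coeffwise_def funpow_Suc_right del: funpow.simps)
    finally show ?thesis .
  qed
qed

lemma M2_J: "\<forall>n. P (f1 n) = f1 n \<Longrightarrow> \<forall>n. P (f2 n) = 0 \<Longrightarrow>
  M_phi2 P U (J f1 f2) = J (coeffwise U f1) (Mz f2)"
proof (rule ext)
  fix n assume h1: "\<forall>n. P (f1 n) = f1 n" and h2: "\<forall>n. P (f2 n) = 0"
  show "M_phi2 P U (J f1 f2) n = J (coeffwise U f1) (Mz f2) n"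
  proof (cases n)
    case 0 thus ?thesis using P_J[OF h1 h2, of 0] by (simp add: M_phi2_def J_def coeffwise_def PU)
  next
    case (Suc m)
    have "M_phi2 P U (J f1 f2) n = U (P (J f1 f2 n)) + (U (J f1 f2 m) - U (P (J f1 f2 m)))"
      by (simp add: M_phi2_def PU Suc)
    also have "\<dots> = U ((adj U ^^ Suc m) (f1 (Suc m))) + U ((U ^^ m) (f2 m))"
      unfolding P_J[OF h1 h2] using Suc by (simp add: J_def U_add del: funpow.simps)
    also have "\<dots> = (adj U ^^ m) (f1 (Suc m)) + (U ^^ Suc m) (f2 m)"
      by simp
    also have "\<dots> = J (coeffwise U f1) (Mz f2) n"
      using Suc by (simp add: J_def coeffwise_def funpow_Suc_right del: funpow.simps)
    finally show ?thesis .
  qed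
qed

end
end



context bcl begin

context
  assumes def0: "\<forall>x. defect_op V1 V2 x = 0"
begin

abbreviation "DD \<equiv> H2 (range P) \<times> H2 (range (\<lambda>x. x - P x)) \<times> Hu"
definition Psi :: "(nat \<Rightarrow> 'e) \<times> (nat \<Rightarrow> 'e) \<times> 'h \<Rightarrow> 'h" where
  "Psi = (\<lambda>(f1, f2, k). \<Phi> (J f1 f2) + k)"

lemma Psi_simp[simp]: "Psi (f1, f2, k) = \<Phi> (J f1 f2) + k" by (simp add: Psi_def)

lemma J_memH2: "f1 \<in> H2 (range P) \<Longrightarrow> f2 \<in> H2 (range (\<lambda>x. x - P x)) \<Longrightarrow> J f1 f2 \<in> H2 UNIV"
  by (rule J_H2) (simp_all add: H2P H2Q)

lemma Psi_inj_aux: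
  assumes f1: "f1 \<in> H2 (range P)" and f2: "f2 \<in> H2 (range (\<lambda>x. x - P x))" and k: "k \<in> Hu"
    and g1: "g1 \<in> H2 (range P)" and g2: "g2 \<in> H2 (range (\<lambda>x. x - P x))" and l: "l \<in> Hu"
    and eq: "Psi (f1, f2, k) = Psi (g1, g2, l)"
  shows "(f1, f2, k) = (g1, g2, l)"
proof -
  have "\<Phi> (J f1 f2) = \<Phi> (J g1 g2) \<and> k = l"
    by (rule dec_unique) (use eq in \<open>simp_all add: Phi_mem J_memH2 f1 f2 g1 g2 k l\<close>)
  hence JJ: "J f1 f2 = J g1 g2" and kl: "k = l"
    using Phi_inj[OF J_memH2[OF f1 f2] J_memH2[OF g1 g2]] by auto
  have h: "\<forall>n. P (f1 n) = f1 n" "\<forall>n. P (f2 n) = 0" "\<forall>n. P (g1 n) = g1 n" "\<forall>n. P (g2 n) = 0"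
    using f1 f2 g1 g2 by (simp_all add: H2P H2Q)
  have e1: "f1 n = g1 n" for n
  proof -
    have "(adj U ^^ n) (f1 n) = (adj U ^^ n) (g1 n)"
      using P_J[OF def0 h(1,2), of n] P_J[OF def0 h(3,4), of n] JJ by simp
    hence "(U ^^ n) ((adj U ^^ n) (f1 n)) = (U ^^ n) ((adj U ^^ n) (g1 n))" by simp
    thus ?thesis by simp
  qed
  have e2: "f2 n = g2 n" for n
  proof -
    have "J f1 f2 n = J g1 g2 n" using JJ by simp
    hence "(U ^^ n) (f2 n) = (U ^^ n) (g2 n)" using e1[of n] by (simp add: J_def)
    hence "(adj U ^^ n) ((U ^^ n) (f2 n)) = (adj U ^^ n) ((U ^^ n) (g2 n))" by simp
    thus ?thesis by simp
  qed
  show "(f1, f2, k) = (g1, g2, l)" using e1 e2 kl by (simp add: fun_eq_iff)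
qed

lemma Psi_inj: "inj_on Psi DD"
proof (rule inj_onI)
  fix x y assume x: "x \<in> DD" and y: "y \<in> DD" and eq: "Psi x = Psi y"
  obtain f1 f2 k where xx: "x = (f1, f2, k)" using prod_cases3 by blast
  obtain g1 g2 l where yy: "y = (g1, g2, l)" using prod_cases3 by blast
  show "x = y" unfolding xx yy
    by (rule Psi_inj_aux) (use x y eq in \<open>simp_all only: xx yy mem_Sigma_iff\<close>)
qed

lemma Psi_surj: "Psi ` DD = UNIV"
proof (rule set_eqI, rule iffI)
  fix x :: 'h
  define h where "h = cf x"
  have h: "h \<in> H2 UNIV" unfolding h_def by (rule cf_mem)
  define f1 where "f1 n = (U ^^ n) (P (h n))" for n
  define f2 where "f2 n = (adj U ^^ n) (h n - P (h n))" for n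
  have f1: "f1 \<in> H2 (range P)" unfolding H2P
  proof
    show "\<forall>n. P (f1 n) = f1 n" by (simp add: f1_def PUpow[OF def0])
    show "f1 \<in> H2 UNIV"
      by (rule H2_sum_bound[OF h h]) (simp add: f1_def order_trans[OF norm_P])
  qed
  have f2: "f2 \<in> H2 (range (\<lambda>x. x - P x))" unfolding H2Q
  proof
    show "\<forall>n. P (f2 n) = 0" by (simp add: f2_def PUapow[OF def0])
    show "f2 \<in> H2 UNIV"
      by (rule H2_sum_bound[OF h h]) (simp add: f2_def order_trans[OF norm_Q])
  qed
  have "J f1 f2 = h" by (simp add: J_def f1_def f2_def fun_eq_iff)
  hence e: "Psi (f1, f2, x - dp x) = x" by (simp add: h_def Phi_cf)
  have m: "x - dp x \<in> Hu" using dp_mem by blast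
  show "x \<in> Psi ` DD"
  proof (rule image_eqI[where x="(f1, f2, x - dp x)"])
    show "x = Psi (f1, f2, x - dp x)" using e by (rule sym)
    show "(f1, f2, x - dp x) \<in> DD" unfolding mem_Sigma_iff using f1 f2 m by blast
  qed
qed simp

lemma Psi_add_aux:
  assumes f1: "f1 \<in> H2 (range P)" and f2: "f2 \<in> H2 (range (\<lambda>x. x - P x))"
    and g1: "g1 \<in> H2 (range P)" and g2: "g2 \<in> H2 (range (\<lambda>x. x - P x))"
  shows "Psi (add3 (f1, f2, k) (g1, g2, l)) = Psi (f1, f2, k) + Psi (g1, g2, l)"
proof -
  have "J (seq_add f1 g1) (seq_add f2 g2) = seq_add (J f1 f2) (J g1 g2)"
    by (simp add: J_def seq_add_def fun_eq_iff Upow_add Uapow_add algebra_simps)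
  thus ?thesis
    using Phi_add J_memH2[OF f1 f2] J_memH2[OF g1 g2] by (simp add: add3_def algebra_simps)
qed

lemma Psi_scale_aux:
  assumes f1: "f1 \<in> H2 (range P)" and f2: "f2 \<in> H2 (range (\<lambda>x. x - P x))"
  shows "Psi (scale3 c (f1, f2, k)) = c *\<^sub>C Psi (f1, f2, k)"
proof -
  have "J (seq_scale c f1) (seq_scale c f2) = seq_scale c (J f1 f2)"
    by (simp add: J_def seq_scale_def fun_eq_iff Upow_scale Uapow_scale scaleC_add_right)
  thus ?thesis
    using Phi_scale J_memH2[OF f1 f2] by (simp add: scale3_def scaleC_add_right)
qed

lemma Psi_inner_aux:
  assumes f1: "f1 \<in> H2 (range P)" and f2: "f2 \<in> H2 (range (\<lambda>x. x - P x))" and k: "k \<in> Hu"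
    and g1: "g1 \<in> H2 (range P)" and g2: "g2 \<in> H2 (range (\<lambda>x. x - P x))" and l: "l \<in> Hu"
  shows "cinner (Psi (f1, f2, k)) (Psi (g1, g2, l)) = inner3 (f1, f2, k) (g1, g2, l)"
proof -
  have "cinner (Psi (f1, f2, k)) (Psi (g1, g2, l)) = h2_inner (J f1 f2) (J g1 g2) + cinner k l"
    by (simp add: inner_dec Phi_mem J_memH2 f1 f2 g1 g2 k l Phi_inner)
  also have "\<dots> = inner3 (f1, f2, k) (g1, g2, l)"
    by (simp add: h2_J[OF def0 f1 f2 g1 g2] inner3_def)
  finally show ?thesis .
qed

lemma Psi_add: "x \<in> DD \<Longrightarrow> y \<in> DD \<Longrightarrow> Psi (add3 x y) = Psi x + Psi y"
proof -
  assume x: "x \<in> DD" and y: "y \<in> DD"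
  obtain f1 f2 k where xx: "x = (f1, f2, k)" using prod_cases3 by blast
  obtain g1 g2 l where yy: "y = (g1, g2, l)" using prod_cases3 by blast
  show ?thesis unfolding xx yy
    by (rule Psi_add_aux) (use x y in \<open>simp_all only: xx yy mem_Sigma_iff\<close>)
qed
lemma Psi_scale: "x \<in> DD \<Longrightarrow> Psi (scale3 c x) = c *\<^sub>C Psi x"
proof -
  assume x: "x \<in> DD"
  obtain f1 f2 k where xx: "x = (f1, f2, k)" using prod_cases3 by blast
  show ?thesis unfolding xx
    by (rule Psi_scale_aux) (use x in \<open>simp_all only: xx mem_Sigma_iff\<close>)
qed
lemma Psi_inner: "x \<in> DD \<Longrightarrow> y \<in> DD \<Longrightarrow> cinner (Psi x) (Psi y) = inner3 x y"
proof -
  assume x: "x \<in> DD" and y: "y \<in> DD"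
  obtain f1 f2 k where xx: "x = (f1, f2, k)" using prod_cases3 by blast
  obtain g1 g2 l where yy: "y = (g1, g2, l)" using prod_cases3 by blast
  show ?thesis unfolding xx yy
    by (rule Psi_inner_aux) (use x y in \<open>simp_all only: xx yy mem_Sigma_iff\<close>)
qed

lemma Psi_unitary3: "unitary3 DD Psi"
  unfolding unitary3_def
  using bij_betw_imageI[OF Psi_inj Psi_surj] Psi_add Psi_scale Psi_inner by blast

lemma Psi_V:
  assumes f1: "f1 \<in> H2 (range P)" and f2: "f2 \<in> H2 (range (\<lambda>x. x - P x))"
  shows "V1 (Psi (f1, f2, k)) = Psi (Mz f1, coeffwise (adj U) f2, V1 k) \<and>
         V2 (Psi (f1, f2, k)) = Psi (coeffwise U f1, Mz f2, V2 k)"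
proof -
  have h: "\<forall>n. P (f1 n) = f1 n" "\<forall>n. P (f2 n) = 0" using f1 f2 by (simp_all add: H2P H2Q)
  show ?thesis
    using J_memH2[OF f1 f2]
    by (simp add: clinear_add[OF V1_lin] clinear_add[OF V2_lin] Phi_V1 Phi_V2 M1_J[OF def0 h] M2_J[OF def0 h])
qed

lemma main:
  assumes comm: "\<forall>x. V1 (V2 x) = V2 (V1 x)"
  shows "U ` range P = range P \<and> U ` range (\<lambda>x. x - P x) = range (\<lambda>x. x - P x) \<and>
    (\<exists>(K :: 'h set) W1 W2 (\<Psi> :: (nat \<Rightarrow> 'e) \<times> (nat \<Rightarrow> 'e) \<times> 'h \<Rightarrow> 'h).
       closed_subspace K \<and> unitary_on K W1 \<and> unitary_on K W2 \<and>
       (\<forall>k\<in>K. W1 (W2 k) = W2 (W1 k)) \<and>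
       unitary3 (H2 (range P) \<times> H2 (range (\<lambda>x. x - P x)) \<times> K) \<Psi> \<and>
       (\<forall>f1\<in>H2 (range P). \<forall>f2\<in>H2 (range (\<lambda>x. x - P x)). \<forall>k\<in>K.
          V1 (\<Psi> (f1, f2, k)) = \<Psi> (Mz f1, coeffwise (adj U) f2, W1 k) \<and>
          V2 (\<Psi> (f1, f2, k)) = \<Psi> (coeffwise U f1, Mz f2, W2 k)))"
proof (intro conjI)
  show "U ` range P = range P" by (rule part1[OF def0])
  show "U ` range (\<lambda>x. x - P x) = range (\<lambda>x. x - P x)" by (rule part2[OF def0])
  show "\<exists>(K :: 'h set) W1 W2 (\<Psi> :: (nat \<Rightarrow> 'e) \<times> (nat \<Rightarrow> 'e) \<times> 'h \<Rightarrow> 'h).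
       closed_subspace K \<and> unitary_on K W1 \<and> unitary_on K W2 \<and>
       (\<forall>k\<in>K. W1 (W2 k) = W2 (W1 k)) \<and>
       unitary3 (H2 (range P) \<times> H2 (range (\<lambda>x. x - P x)) \<times> K) \<Psi> \<and>
       (\<forall>f1\<in>H2 (range P). \<forall>f2\<in>H2 (range (\<lambda>x. x - P x)). \<forall>k\<in>K.
          V1 (\<Psi> (f1, f2, k)) = \<Psi> (Mz f1, coeffwise (adj U) f2, W1 k) \<and>
          V2 (\<Psi> (f1, f2, k)) = \<Psi> (coeffwise U f1, Mz f2, W2 k))"
    by (rule exI[of _ Hu], rule exI[of _ V1], rule exI[of _ V2], rule exI[of _ Psi])
       (simp add: Hu uHu1 uHu2 comm Psi_unitary3 Psi_V del: Psi_simp)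
qed

end
end


lemma bcl_ex:
  fixes V1 V2 :: "'h::chilbert \<Rightarrow> 'h" and P U :: "'e::chilbert \<Rightarrow> 'e"
  assumes B: "BCL_triple V1 V2 P U" and i1: "isometry V1" and i2: "isometry V2"
  shows "\<exists>Hp Hu (\<Phi> :: (nat \<Rightarrow> 'e) \<Rightarrow> 'h). bcl V1 V2 P U Hp Hu \<Phi>"
proof -
  have op: "orth_proj P" and un: "unitary U" using B by (simp_all add: BCL_triple_def)
  have "\<exists>Hp Hu (\<Phi> :: (nat \<Rightarrow> 'e) \<Rightarrow> 'h). closed_subspace Hp \<and> closed_subspace Hu \<and>
       (\<forall>a\<in>Hp. \<forall>b\<in>Hu. cinner a b = 0) \<and> (\<forall>x. \<exists>a\<in>Hp. \<exists>b\<in>Hu. x = a + b) \<and>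
       V1 ` Hp \<subseteq> Hp \<and> V2 ` Hp \<subseteq> Hp \<and> adj V1 ` Hp \<subseteq> Hp \<and> adj V2 ` Hp \<subseteq> Hp \<and>
       V1 ` Hu \<subseteq> Hu \<and> V2 ` Hu \<subseteq> Hu \<and> adj V1 ` Hu \<subseteq> Hu \<and> adj V2 ` Hu \<subseteq> Hu \<and>
       bij_betw \<Phi> (H2 UNIV) Hp \<and>
       (\<forall>f\<in>H2 UNIV. \<forall>g\<in>H2 UNIV. \<Phi> (seq_add f g) = \<Phi> f + \<Phi> g) \<and>
       (\<forall>c. \<forall>f\<in>H2 UNIV. \<Phi> (seq_scale c f) = c *\<^sub>C \<Phi> f) \<and>
       (\<forall>f\<in>H2 UNIV. \<forall>g\<in>H2 UNIV. cinner (\<Phi> f) (\<Phi> g) = h2_inner f g) \<and>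
       (\<forall>f\<in>H2 UNIV. V1 (\<Phi> f) = \<Phi> (M_phi1 P U f)) \<and>
       (\<forall>f\<in>H2 UNIV. V2 (\<Phi> f) = \<Phi> (M_phi2 P U f)) \<and>
       unitary_on Hu V1 \<and> unitary_on Hu V2"
    using B by (simp add: BCL_triple_def)
  then obtain Hp Hu and \<Phi> :: "(nat \<Rightarrow> 'e) \<Rightarrow> 'h" where H: "closed_subspace Hp \<and> closed_subspace Hu \<and>
       (\<forall>a\<in>Hp. \<forall>b\<in>Hu. cinner a b = 0) \<and> (\<forall>x. \<exists>a\<in>Hp. \<exists>b\<in>Hu. x = a + b) \<and>
       V1 ` Hp \<subseteq> Hp \<and> V2 ` Hp \<subseteq> Hp \<and> adj V1 ` Hp \<subseteq> Hp \<and> adj V2 ` Hp \<subseteq> Hp \<and>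
       V1 ` Hu \<subseteq> Hu \<and> V2 ` Hu \<subseteq> Hu \<and> adj V1 ` Hu \<subseteq> Hu \<and> adj V2 ` Hu \<subseteq> Hu \<and>
       bij_betw \<Phi> (H2 UNIV) Hp \<and>
       (\<forall>f\<in>H2 UNIV. \<forall>g\<in>H2 UNIV. \<Phi> (seq_add f g) = \<Phi> f + \<Phi> g) \<and>
       (\<forall>c. \<forall>f\<in>H2 UNIV. \<Phi> (seq_scale c f) = c *\<^sub>C \<Phi> f) \<and>
       (\<forall>f\<in>H2 UNIV. \<forall>g\<in>H2 UNIV. cinner (\<Phi> f) (\<Phi> g) = h2_inner f g) \<and>
       (\<forall>f\<in>H2 UNIV. V1 (\<Phi> f) = \<Phi> (M_phi1 P U f)) \<and>
       (\<forall>f\<in>H2 UNIV. V2 (\<Phi> f) = \<Phi> (M_phi2 P U f)) \<and>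
       unitary_on Hu V1 \<and> unitary_on Hu V2"
    by (elim exE) (erule that)
  have "bcl V1 V2 P U Hp Hu \<Phi>"
    using H i1 i2 op un by (simp add: bcl_def)
  thus ?thesis by blast
qed


theorem theorem2p4:
  fixes V1 V2 :: "'h::chilbert \<Rightarrow> 'h"
    and P U :: "'e::chilbert \<Rightarrow> 'e"
  assumes "isometry V1" and "isometry V2"
    and "\<forall>x. V1 (V2 x) = V2 (V1 x)"
    and "\<forall>x. defect_op V1 V2 x = 0"
    and "BCL_triple V1 V2 P U"
  shows "U ` range P = range P \<and> U ` range (\<lambda>x. x - P x) = range (\<lambda>x. x - P x) \<and>
    (\<exists>(K :: 'h set) W1 W2 (\<Psi> :: (nat \<Rightarrow> 'e) \<times> (nat \<Rightarrow> 'e) \<times> 'h \<Rightarrow> 'h).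
       closed_subspace K \<and> unitary_on K W1 \<and> unitary_on K W2 \<and>
       (\<forall>k\<in>K. W1 (W2 k) = W2 (W1 k)) \<and>
       unitary3 (H2 (range P) \<times> H2 (range (\<lambda>x. x - P x)) \<times> K) \<Psi> \<and>
       (\<forall>f1\<in>H2 (range P). \<forall>f2\<in>H2 (range (\<lambda>x. x - P x)). \<forall>k\<in>K.
          V1 (\<Psi> (f1, f2, k)) = \<Psi> (Mz f1, coeffwise (adj U) f2, W1 k) \<and>
          V2 (\<Psi> (f1, f2, k)) = \<Psi> (coeffwise U f1, Mz f2, W2 k)))"
proof -
  obtain Hp Hu and \<Phi> :: "(nat \<Rightarrow> 'e) \<Rightarrow> 'h" where "bcl V1 V2 P U Hp Hu \<Phi>"
    using bcl_ex[OF assms(5,1,2)] by blast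
  from bcl.main[OF this assms(4) assms(3)] show ?thesis .
qed

end
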